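(* Let $(X,\le)$ be a locally finite poset and $R$ a commutative ring with identity. Let $\eta\in[\mathbb{I}_{(X,\le)},R]$ be given by $\eta[x,x]=1$, $\eta[x,y]=-1$ if $x\prec y$, and $\eta[x,y]=0$ otherwise. Then $\eta$ is invertible in the incidence algebra and, for all $x\le y$, $\eta^{-1}[x,y]=|\mathbb{M}[x,y]|$, the number of maximal linearly ordered subsets of the interval $[x,y]$. Consequently, for $a\in X$ and $f,g:X_{\ge a}\to R$, one has $g(y)=f(y)-\sum_{a\le x\prec y}f(x)$ for all $y\ge a$ if and only if $f(y)=\sum_{a\le x\le y}|\mathbb{M}[x,y]|\,g(x)$ for all $y\ge a$.
   Context: A poset is locally finite if all intervals $[x,y]=\{z:x\le z\le y\}$ are finite. The cover relation: $x\prec y$ iff $x<y$ and there is no $z$ with $x<z<y$. $X_{\ge a}=\{x\in X: x\ge a\}$. The incidence algebra $[\mathbb{I}_{(X,\le)},R]$ consists of maps from intervals to $R$ with product $(f\star g)[x,z]=\sum_{x\le y\le z}f[x,y]g[y,z]$ and unit $\epsilon[x,y]=\delta_{x,y}$. *)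

theory Defs
  imports Main
begin

text \<open>A poset X is modelled as a type of class order; local finiteness is an explicit hypothesis.\<close>

definition locally_finite :: "'a::order itself \<Rightarrow> bool" where
  "locally_finite _ \<longleftrightarrow> (\<forall>x y::'a. finite {x..y})"

definition covers :: "'a::order \<Rightarrow> 'a \<Rightarrow> bool" (infix "\<prec>\<^sub>c" 50) where
  "x \<prec>\<^sub>c y \<longleftrightarrow> x < y \<and> \<not> (\<exists>z. x < z \<and> z < y)"

text \<open>Elements of the incidence algebra: maps on intervals, represented as functions of
  the two endpoints; only the values at x \<le> y are meaningful.\<close>
definition inc_mult :: "('a::order \<Rightarrow> 'a \<Rightarrow> 'r::comm_ring_1) \<Rightarrow> ('a \<Rightarrow> 'a \<Rightarrow> 'r) \<Rightarrow> 'a \<Rightarrow> 'a \<Rightarrow> 'r"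
  (infixl "\<star>" 70) where
  "(f \<star> g) x z = (\<Sum>y\<in>{x..z}. f x y * g y z)"

definition inc_unit :: "'a::order \<Rightarrow> 'a \<Rightarrow> 'r::comm_ring_1" where
  "inc_unit x y = (if x = y then 1 else 0)"

definition inc_eq :: "('a::order \<Rightarrow> 'a \<Rightarrow> 'r) \<Rightarrow> ('a \<Rightarrow> 'a \<Rightarrow> 'r) \<Rightarrow> bool" where
  "inc_eq f g \<longleftrightarrow> (\<forall>x y. x \<le> y \<longrightarrow> f x y = g x y)"

definition inc_inverse_of :: "('a::order \<Rightarrow> 'a \<Rightarrow> 'r::comm_ring_1) \<Rightarrow> ('a \<Rightarrow> 'a \<Rightarrow> 'r) \<Rightarrow> bool" where
  "inc_inverse_of h f \<longleftrightarrow> inc_eq (f \<star> h) inc_unit \<and> inc_eq (h \<star> f) inc_unit"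

definition inc_invertible :: "('a::order \<Rightarrow> 'a \<Rightarrow> 'r::comm_ring_1) \<Rightarrow> bool" where
  "inc_invertible f \<longleftrightarrow> (\<exists>h. inc_inverse_of h f)"

definition eta :: "'a::order \<Rightarrow> 'a \<Rightarrow> 'r::comm_ring_1" where
  "eta x y = (if x = y then 1 else if x \<prec>\<^sub>c y then -1 else 0)"

definition linearly_ordered :: "'a::order set \<Rightarrow> bool" where
  "linearly_ordered C \<longleftrightarrow> (\<forall>a\<in>C. \<forall>b\<in>C. a \<le> b \<or> b \<le> a)"

definition max_chains :: "'a::order \<Rightarrow> 'a \<Rightarrow> 'a set set" where
  "max_chains x y = {C. C \<subseteq> {x..y} \<and> linearly_ordered C \<and>
      (\<forall>D. D \<subseteq> {x..y} \<and> linearly_ordered D \<and> C \<subseteq> D \<longrightarrow> D = C)}"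

end

theory Submission
  imports Defs
begin

definition Ivl :: "('a \<Rightarrow> 'a \<Rightarrow> bool) \<Rightarrow> 'a \<Rightarrow> 'a \<Rightarrow> 'a set" where
  "Ivl le x z = {w. le x w \<and> le w z}"
definition chn :: "('a \<Rightarrow> 'a \<Rightarrow> bool) \<Rightarrow> 'a set \<Rightarrow> bool" where
  "chn le C \<longleftrightarrow> (\<forall>a\<in>C. \<forall>b\<in>C. le a b \<or> le b a)"
definition MC :: "('a \<Rightarrow> 'a \<Rightarrow> bool) \<Rightarrow> 'a \<Rightarrow> 'a \<Rightarrow> 'a set set" where
  "MC le x z = {C. C \<subseteq> Ivl le x z \<and> chn le C \<and> (\<forall>D. D \<subseteq> Ivl le x z \<and> chn le D \<and> C \<subseteq> D \<longrightarrow> D = C)}"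
definition cov :: "('a \<Rightarrow> 'a \<Rightarrow> bool) \<Rightarrow> 'a \<Rightarrow> 'a \<Rightarrow> bool" where
  "cov le y z \<longleftrightarrow> le y z \<and> y \<noteq> z \<and> \<not> (\<exists>w. le y w \<and> w \<noteq> y \<and> le w z \<and> w \<noteq> z)"

lemma chain_max:
  assumes refl: "\<And>a. le a a" and trans: "\<And>a b c. le a b \<Longrightarrow> le b c \<Longrightarrow> le a c"
  and "finite S" "S \<noteq> {}" "chn le S"
  shows "\<exists>y\<in>S. \<forall>c\<in>S. le c y"
  using assms(3-5)
proof (induction S rule: finite_ne_induct)
  case (singleton x) then show ?case using refl by auto
next
  case (insert a F)
  have "chn le F" using insert.prems unfolding chn_def by auto
  then obtain y where y: "y \<in> F" "\<forall>c\<in>F. le c y" using insert.IH by auto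
  have "le y a \<or> le a y" using insert.prems y(1) unfolding chn_def by auto
  then show ?case
  proof
    assume "le y a" then show ?thesis using y refl trans by blast
  next
    assume "le a y" then show ?thesis using y by blast
  qed
qed

lemma MC_endpoints:
  assumes "C \<in> MC le u v" "le u v" "\<And>a. le a a"
  shows "u \<in> C" "v \<in> C"
proof -
  have C: "C \<subseteq> Ivl le u v" "chn le C" "\<And>D. D \<subseteq> Ivl le u v \<Longrightarrow> chn le D \<Longrightarrow> C \<subseteq> D \<Longrightarrow> D = C"
    using assms(1) unfolding MC_def by auto
  have "insert u C = C"
    apply (rule C(3))
    using C(1,2) assms(2,3) unfolding Ivl_def chn_def by auto
  then show "u \<in> C" by blast
  have "insert v C = C"
    apply (rule C(3))
    using C(1,2) assms(2,3) unfolding Ivl_def chn_def by auto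
  then show "v \<in> C" by blast
qed

lemma MC_base:
  assumes refl: "\<And>a. le a a" and anti: "\<And>a b. le a b \<Longrightarrow> le b a \<Longrightarrow> a = b"
  shows "MC le x x = {{x}}"
proof -
  have I: "Ivl le x x = {x}" using refl anti unfolding Ivl_def by auto
  show ?thesis
  proof (intro equalityI subsetI)
    fix C assume C: "C \<in> MC le x x"
    then have "x \<in> C" using MC_endpoints[OF C refl refl] by auto
    moreover have "C \<subseteq> {x}" using C I unfolding MC_def by auto
    ultimately show "C \<in> {{x}}" by auto
  next
    fix C assume "C \<in> {{x}}"
    then show "C \<in> MC le x x" unfolding MC_def I chn_def using refl by auto
  qed
qed

lemma MC_step:
  fixes le :: "'a \<Rightarrow> 'a \<Rightarrow> bool"
  assumes refl: "\<And>a. le a a" and trans: "\<And>a b c. le a b \<Longrightarrow> le b c \<Longrightarrow> le a c"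
    and anti: "\<And>a b. le a b \<Longrightarrow> le b a \<Longrightarrow> a = b"
    and fin: "finite (Ivl le x z)" and xz: "le x z" "x \<noteq> z"
  shows "card (MC le x z) = (\<Sum>y\<in>{y. le x y \<and> cov le y z}. card (MC le x y))"
proof -
  define Y where "Y = {y. le x y \<and> cov le y z}"
  have YI: "Y \<subseteq> Ivl le x z" unfolding Y_def Ivl_def cov_def by auto
  have finY: "finite Y" using finite_subset[OF YI fin] .
  have znot: "z \<notin> D" if "y \<in> Y" "D \<in> MC le x y" for y D
  proof
    assume "z \<in> D"
    then have "le z y" using that(2) unfolding MC_def Ivl_def by auto
    moreover have "le y z" "y \<noteq> z" using that(1) unfolding Y_def cov_def by auto
    ultimately show False using anti by auto
  qed
  have finMC: "finite (MC le x y)" if "y \<in> Y" for y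
  proof -
    have "Ivl le x y \<subseteq> Ivl le x z" using that unfolding Y_def cov_def Ivl_def using trans by blast
    then have "MC le x y \<subseteq> Pow (Ivl le x z)" unfolding MC_def by auto
    then show ?thesis using fin by (meson finite_Pow_iff finite_subset)
  qed
  have E: "MC le x z = (\<Union>y\<in>Y. insert z ` MC le x y)"
  proof (intro equalityI subsetI)
    fix C assume C0: "C \<in> MC le x z"
    have C: "C \<subseteq> Ivl le x z" "chn le C" "\<And>D. D \<subseteq> Ivl le x z \<Longrightarrow> chn le D \<Longrightarrow> C \<subseteq> D \<Longrightarrow> D = C"
      using C0 unfolding MC_def by auto
    have xC: "x \<in> C" and zC: "z \<in> C" using MC_endpoints[OF C0 xz(1) refl] by auto
    define S where "S = C - {z}"
    have finS: "finite S" using finite_subset[OF C(1) fin] unfolding S_def by auto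
    have xS: "x \<in> S" using xC xz unfolding S_def by auto
    have chS: "chn le S" using C(2) unfolding S_def chn_def by auto
    have Sne: "S \<noteq> {}" using xS by auto
    have "\<exists>y\<in>S. \<forall>c\<in>S. le c y"
      apply (rule chain_max[where le=le])
      apply (rule refl)
      apply (erule (1) trans)
      apply (rule finS)
      apply (rule Sne)
      apply (rule chS)
      done
    then obtain y where y: "y \<in> S" "\<forall>c\<in>S. le c y" by blast
    have yz: "le y z" "y \<noteq> z" using y(1) C(1) unfolding S_def Ivl_def by auto
    have xy: "le x y" using y(2) xS by auto
    have covyz: "cov le y z"
      unfolding cov_def
    proof (intro conjI yz notI)
      assume "\<exists>w. le y w \<and> w \<noteq> y \<and> le w z \<and> w \<noteq> z"
      then obtain w where w: "le y w" "w \<noteq> y" "le w z" "w \<noteq> z" by blast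
      have "insert w C = C"
      proof (rule C(3))
        show "insert w C \<subseteq> Ivl le x z" using C(1) w xy trans unfolding Ivl_def by blast
        show "chn le (insert w C)" unfolding chn_def
        proof (intro ballI)
          fix a b assume ab: "a \<in> insert w C" "b \<in> insert w C"
          have wc: "le c w \<or> le w c" if "c \<in> C" for c
          proof (cases "c = z")
            case True then show ?thesis using w by auto
          next
            case False then have "c \<in> S" using that unfolding S_def by auto
            then show ?thesis using y(2) w(1) trans by blast
          qed
          show "le a b \<or> le b a" using ab wc C(2) refl unfolding chn_def by blast
        qed
        show "C \<subseteq> insert w C" by auto
      qed
      then have "w \<in> S" using w unfolding S_def by auto
      then have "le w y" using y by auto
      then show False using anti w by auto
    qed
    have yY: "y \<in> Y" unfolding Y_def using xy covyz by auto
    have SMC: "S \<in> MC le x y"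
      unfolding MC_def
    proof (intro CollectI conjI allI impI)
      show "S \<subseteq> Ivl le x y" using y(2) C(1) unfolding S_def Ivl_def by auto
      show "chn le S" by (rule chS)
      fix D assume D: "D \<subseteq> Ivl le x y \<and> chn le D \<and> S \<subseteq> D"
      have "insert z D = C"
      proof (rule C(3))
        show "insert z D \<subseteq> Ivl le x z" using D yz xz trans refl unfolding Ivl_def by blast
        show "chn le (insert z D)" using D yz trans refl unfolding chn_def Ivl_def by blast
        show "C \<subseteq> insert z D" using D unfolding S_def by auto
      qed
      moreover have "z \<notin> D" using D yz anti unfolding Ivl_def by blast
      ultimately show "D = S" unfolding S_def by auto
    qed
    have "C = insert z S" using zC unfolding S_def by auto
    then show "C \<in> (\<Union>y\<in>Y. insert z ` MC le x y)" using yY SMC by blast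
  next
    fix C assume "C \<in> (\<Union>y\<in>Y. insert z ` MC le x y)"
    then obtain y D where yY: "y \<in> Y" and D0: "D \<in> MC le x y" and CD: "C = insert z D" by blast
    have D: "D \<subseteq> Ivl le x y" "chn le D" "\<And>E. E \<subseteq> Ivl le x y \<Longrightarrow> chn le E \<Longrightarrow> D \<subseteq> E \<Longrightarrow> E = D"
      using D0 unfolding MC_def by auto
    have xy: "le x y" and cyz: "cov le y z" using yY unfolding Y_def by auto
    have yz: "le y z" using cyz unfolding cov_def by auto
    have yD: "y \<in> D" using MC_endpoints[OF D0 xy refl] by auto
    have zD: "z \<notin> D" using znot[OF yY D0] .
    show "C \<in> MC le x z"
      unfolding MC_def
    proof (intro CollectI conjI allI impI)
      show "C \<subseteq> Ivl le x z" using D(1) CD yz xz trans refl unfolding Ivl_def by blast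
      show "chn le C" using D(1,2) CD yz trans refl unfolding chn_def Ivl_def by blast
      fix E assume E: "E \<subseteq> Ivl le x z \<and> chn le E \<and> C \<subseteq> E"
      have "E - {z} \<subseteq> Ivl le x y"
      proof
        fix e assume e: "e \<in> E - {z}"
        have "y \<in> E" using yD E CD by auto
        then have "le e y \<or> le y e" using E e unfolding chn_def by auto
        moreover have "le x e" "le e z" using E e unfolding Ivl_def by auto
        ultimately have "le e y" using cyz e refl unfolding cov_def by blast
        then show "e \<in> Ivl le x y" using \<open>le x e\<close> unfolding Ivl_def by auto
      qed
      moreover have "chn le (E - {z})" using E unfolding chn_def by auto
      moreover have "D \<subseteq> E - {z}" using E CD zD by auto
      ultimately have "E - {z} = D" using D(3) by blast
      then show "E = C" using CD E by auto
    qed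
  qed
  have disj: "\<forall>i\<in>Y. \<forall>j\<in>Y. i \<noteq> j \<longrightarrow> insert z ` MC le x i \<inter> insert z ` MC le x j = {}"
  proof (intro ballI impI)
    fix i j assume ij: "i \<in> Y" "j \<in> Y" "i \<noteq> j"
    show "insert z ` MC le x i \<inter> insert z ` MC le x j = {}"
    proof (rule ccontr)
      assume "insert z ` MC le x i \<inter> insert z ` MC le x j \<noteq> {}"
      then obtain D1 D2 where D: "D1 \<in> MC le x i" "D2 \<in> MC le x j" "insert z D1 = insert z D2" by blast
      have "z \<notin> D1" "z \<notin> D2" using znot ij D by auto
      then have "D1 = D2" using D(3) by (metis Diff_insert_absorb)
      have xi: "le x i" "le x j" using ij unfolding Y_def by auto
      have "i \<in> D1" "j \<in> D2" using MC_endpoints[OF D(1) xi(1) refl] MC_endpoints[OF D(2) xi(2) refl] by auto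
      then have "le i j" "le j i" using D \<open>D1 = D2\<close> unfolding MC_def Ivl_def by auto
      then show False using anti ij by auto
    qed
  qed
  have inj: "inj_on (insert z) (MC le x y)" if "y \<in> Y" for y
    using znot[OF that] unfolding inj_on_def by (metis Diff_insert_absorb)
  have "card (MC le x z) = (\<Sum>y\<in>Y. card (insert z ` MC le x y))"
    unfolding E using card_UN_disjoint[OF finY _ disj] finMC by auto
  also have "\<dots> = (\<Sum>y\<in>Y. card (MC le x y))"
    by (rule sum.cong) (auto simp: card_image inj)
  finally show ?thesis unfolding Y_def .
qed


lemma lfD: "locally_finite TYPE('a::order) \<Longrightarrow> finite {x..y::'a}"
  unfolding locally_finite_def by auto

lemma Ivl_le: "Ivl (\<le>) x z = {x..z}" unfolding Ivl_def by auto
lemma Ivl_ge: "Ivl (\<lambda>a b. b \<le> a) z x = {x..z}" unfolding Ivl_def by auto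
lemma chn_le: "chn (\<le>) C = linearly_ordered C" unfolding chn_def linearly_ordered_def by auto
lemma chn_ge: "chn (\<lambda>a b. b \<le> a) C = linearly_ordered C" unfolding chn_def linearly_ordered_def by auto
lemma mc_le: "max_chains x z = MC (\<le>) x z"
  unfolding MC_def max_chains_def Ivl_le chn_le by simp
lemma mc_ge: "max_chains x z = MC (\<lambda>a b. b \<le> a) z x"
  unfolding MC_def max_chains_def Ivl_ge chn_ge by simp
lemma cov_le: "cov (\<le>) y z \<longleftrightarrow> y \<prec>\<^sub>c z"
  unfolding cov_def covers_def by (auto simp: less_le)
lemma cov_ge: "cov (\<lambda>a b. b \<le> a) y x \<longleftrightarrow> x \<prec>\<^sub>c y"
  unfolding cov_def covers_def by (auto simp: less_le)

lemma card_base: "card (max_chains (x::'a::order) x) = 1"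
  unfolding mc_le by (subst MC_base) auto

lemma cardR:
  assumes lf: "locally_finite TYPE('a::order)" and "(x::'a) \<le> z" "x \<noteq> z"
  shows "card (max_chains x z) = (\<Sum>y\<in>{y. x \<le> y \<and> y \<prec>\<^sub>c z}. card (max_chains x y))"
  unfolding mc_le
  using MC_step[where le="(\<le>)" and x=x and z=z] assms lfD[OF lf] unfolding Ivl_le cov_le
  by (auto intro: order_trans antisym)

lemma cardL:
  assumes lf: "locally_finite TYPE('a::order)" and "(x::'a) \<le> z" "x \<noteq> z"
  shows "card (max_chains x z) = (\<Sum>y\<in>{y. x \<prec>\<^sub>c y \<and> y \<le> z}. card (max_chains y z))"
proof -
  have "card (MC (\<lambda>a b. b \<le> a) z x) = (\<Sum>y\<in>{y. y \<le> z \<and> cov (\<lambda>a b. b \<le> a) y x}. card (MC (\<lambda>a b. b \<le> a) z y))"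
    using MC_step[where le="\<lambda>a b. b \<le> a" and x=z and z=x] assms lfD[OF lf] unfolding Ivl_ge
    by (auto intro: order_trans antisym)
  then show ?thesis unfolding cov_ge mc_ge[symmetric] by (simp add: conj_commute)
qed

lemma etaR:
  assumes lf: "locally_finite TYPE('a::order)" and ay: "(a::'a) \<le> y"
  shows "(\<Sum>x\<in>{a..y}. f x * (eta x y :: 'r::comm_ring_1)) = f y - (\<Sum>x\<in>{x. a \<le> x \<and> x \<prec>\<^sub>c y}. f x)"
proof -
  have fin: "finite {a..y}" using lfD[OF lf] .
  have "(\<Sum>x\<in>{a..y}. f x * eta x y) = (\<Sum>x\<in>{a..y}. (if x = y then f y else 0) - (if x \<prec>\<^sub>c y then f x else 0))"
    by (rule sum.cong) (auto simp: eta_def covers_def)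
  also have "\<dots> = f y - (\<Sum>x\<in>{a..y}. if x \<prec>\<^sub>c y then f x else 0)"
    using ay fin by (simp add: sum_subtractf)
  also have "(\<Sum>x\<in>{a..y}. if x \<prec>\<^sub>c y then f x else 0) = (\<Sum>x\<in>{x\<in>{a..y}. x \<prec>\<^sub>c y}. f x)"
    by (rule sum.inter_filter[OF fin, symmetric])
  also have "{x\<in>{a..y}. x \<prec>\<^sub>c y} = {x. a \<le> x \<and> x \<prec>\<^sub>c y}"
    by (auto simp: covers_def)
  finally show ?thesis .
qed

lemma etaL:
  assumes lf: "locally_finite TYPE('a::order)" and ay: "(x::'a) \<le> b"
  shows "(\<Sum>y\<in>{x..b}. (eta x y :: 'r::comm_ring_1) * f y) = f x - (\<Sum>y\<in>{y. x \<prec>\<^sub>c y \<and> y \<le> b}. f y)"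
proof -
  have fin: "finite {x..b}" using lfD[OF lf] .
  have "(\<Sum>y\<in>{x..b}. eta x y * f y) = (\<Sum>y\<in>{x..b}. (if x = y then f x else 0) - (if x \<prec>\<^sub>c y then f y else 0))"
    by (rule sum.cong) (auto simp: eta_def covers_def)
  also have "\<dots> = f x - (\<Sum>y\<in>{x..b}. if x \<prec>\<^sub>c y then f y else 0)"
    using ay fin by (simp add: sum_subtractf)
  also have "(\<Sum>y\<in>{x..b}. if x \<prec>\<^sub>c y then f y else 0) = (\<Sum>y\<in>{y\<in>{x..b}. x \<prec>\<^sub>c y}. f y)"
    by (rule sum.inter_filter[OF fin, symmetric])
  also have "{y\<in>{x..b}. x \<prec>\<^sub>c y} = {y. x \<prec>\<^sub>c y \<and> y \<le> b}"
    by (auto simp: covers_def)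
  finally show ?thesis .
qed

definition mm :: "'a::order \<Rightarrow> 'a \<Rightarrow> 'r::comm_ring_1" where
  "mm x y = of_nat (card (max_chains x y))"

lemma m_eta:
  assumes lf: "locally_finite TYPE('a::order)" and xz: "(x::'a) \<le> z"
  shows "(mm \<star> eta) x z = (inc_unit x z :: 'r::comm_ring_1)"
proof -
  have "(mm \<star> eta) x z = mm x z - (\<Sum>y\<in>{y. x \<le> y \<and> y \<prec>\<^sub>c z}. (mm x y :: 'r))"
    unfolding inc_mult_def by (rule etaR[OF lf xz])
  also have "\<dots> = inc_unit x z"
  proof (cases "x = z")
    case True
    then have E: "{y. x \<le> y \<and> y \<prec>\<^sub>c z} = {}" by (auto simp: covers_def)
    show ?thesis unfolding E using True by (simp add: mm_def card_base inc_unit_def)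
  next
    case False
    then show ?thesis unfolding mm_def inc_unit_def
      by (simp add: cardR[OF lf xz False] of_nat_sum)
  qed
  finally show ?thesis .
qed

lemma eta_m:
  assumes lf: "locally_finite TYPE('a::order)" and xz: "(x::'a) \<le> z"
  shows "(eta \<star> mm) x z = (inc_unit x z :: 'r::comm_ring_1)"
proof -
  have "(eta \<star> mm) x z = mm x z - (\<Sum>y\<in>{y. x \<prec>\<^sub>c y \<and> y \<le> z}. (mm y z :: 'r))"
    unfolding inc_mult_def by (rule etaL[OF lf xz])
  also have "\<dots> = inc_unit x z"
  proof (cases "x = z")
    case True
    then have E: "{y. x \<prec>\<^sub>c y \<and> y \<le> z} = {}" by (auto simp: covers_def)
    show ?thesis unfolding E using True by (simp add: mm_def card_base inc_unit_def)
  next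
    case False
    then show ?thesis unfolding mm_def inc_unit_def
      by (simp add: cardL[OF lf xz False] of_nat_sum)
  qed
  finally show ?thesis .
qed

lemma swap:
  assumes lf: "locally_finite TYPE('a::order)"
  shows "(\<Sum>x\<in>{a..y::'a}. \<Sum>w\<in>{a..x}. P w x) = (\<Sum>w\<in>{a..y}. \<Sum>x\<in>{w..y}. (P w x :: 'r::comm_monoid_add))"
proof -
  have fin: "finite {a..y}" using lfD[OF lf] .
  have "(\<Sum>x\<in>{a..y}. \<Sum>w\<in>{a..x}. P w x) = (\<Sum>x\<in>{a..y}. \<Sum>w\<in>{a..y}. if w \<le> x then P w x else 0)"
  proof (rule sum.cong[OF refl])
    fix x assume x: "x \<in> {a..y}"
    have "{w\<in>{a..y}. w \<le> x} = {a..x}" using x by auto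
    then show "(\<Sum>w\<in>{a..x}. P w x) = (\<Sum>w\<in>{a..y}. if w \<le> x then P w x else 0)"
      using fin by (simp add: sum.inter_filter[symmetric])
  qed
  also have "\<dots> = (\<Sum>w\<in>{a..y}. \<Sum>x\<in>{a..y}. if w \<le> x then P w x else 0)"
    by (rule sum.swap)
  also have "\<dots> = (\<Sum>w\<in>{a..y}. \<Sum>x\<in>{w..y}. P w x)"
  proof (rule sum.cong[OF refl])
    fix w assume w: "w \<in> {a..y}"
    have "{x\<in>{a..y}. w \<le> x} = {w..y}" using w by auto
    then show "(\<Sum>x\<in>{a..y}. if w \<le> x then P w x else 0) = (\<Sum>x\<in>{w..y}. P w x)"
      using fin by (simp add: sum.inter_filter[symmetric])
  qed
  finally show ?thesis .
qed

lemma assoc_gen: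
  assumes lf: "locally_finite TYPE('a::order)"
  shows "(\<Sum>w\<in>{a..y::'a}. (\<Sum>z\<in>{a..w}. F z * K z w) * L w y)
       = (\<Sum>z\<in>{a..y}. F z * (\<Sum>w\<in>{z..y}. K z w * (L w y :: 'r::comm_ring_1)))"
proof -
  have "(\<Sum>w\<in>{a..y}. (\<Sum>z\<in>{a..w}. F z * K z w) * L w y) = (\<Sum>w\<in>{a..y}. \<Sum>z\<in>{a..w}. F z * (K z w * L w y))"
    by (simp add: sum_distrib_right mult.assoc)
  also have "\<dots> = (\<Sum>z\<in>{a..y}. \<Sum>w\<in>{z..y}. F z * (K z w * L w y))"
    by (rule swap[OF lf])
  also have "\<dots> = (\<Sum>z\<in>{a..y}. F z * (\<Sum>w\<in>{z..y}. K z w * L w y))"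
    by (simp add: sum_distrib_left)
  finally show ?thesis .
qed

lemma unitR:
  assumes lf: "locally_finite TYPE('a::order)" and "(a::'a) \<le> y" shows "(\<Sum>w\<in>{a..y}. F w * inc_unit w y) = (F y :: 'r::comm_ring_1)"
proof -
  have "(\<Sum>w\<in>{a..y}. F w * inc_unit w y) = (\<Sum>w\<in>{a..y}. if w = y then F y else 0)"
    by (rule sum.cong) (auto simp: inc_unit_def)
  then show ?thesis using assms lfD[OF lf, of a y] by (simp add: sum.delta')
qed

lemma unitL:
  assumes lf: "locally_finite TYPE('a::order)" and "(a::'a) \<le> y" shows "(\<Sum>w\<in>{a..y}. inc_unit a w * F w) = (F a :: 'r::comm_ring_1)"
proof -
  have "(\<Sum>w\<in>{a..y}. inc_unit a w * F w) = (\<Sum>w\<in>{a..y}. if a = w then F a else 0)"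
    by (rule sum.cong) (auto simp: inc_unit_def)
  then show ?thesis using assms lfD[OF lf, of a y] by (simp add: sum.delta)
qed


theorem mainTheorem7:
  assumes "locally_finite TYPE('a::order)"
  shows "inc_invertible (eta :: 'a \<Rightarrow> 'a \<Rightarrow> 'r::comm_ring_1)
    \<and> (\<forall>h. inc_inverse_of h (eta :: 'a \<Rightarrow> 'a \<Rightarrow> 'r) \<longrightarrow>
          (\<forall>x y. x \<le> y \<longrightarrow> h x y = of_nat (card (max_chains x y))))
    \<and> (\<forall>(a::'a) (f::'a \<Rightarrow> 'r) g.
          (\<forall>y. a \<le> y \<longrightarrow> g y = f y - (\<Sum>x\<in>{x. a \<le> x \<and> x \<prec>\<^sub>c y}. f x))
          \<longleftrightarrow> (\<forall>y. a \<le> y \<longrightarrow> f y = (\<Sum>x\<in>{a..y}. of_nat (card (max_chains x y)) * g x)))"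
proof (intro conjI allI impI)
  show "inc_invertible (eta :: 'a \<Rightarrow> 'a \<Rightarrow> 'r)"
    unfolding inc_invertible_def inc_inverse_of_def inc_eq_def
    using m_eta[OF assms] eta_m[OF assms] by blast
next
  fix h :: "'a \<Rightarrow> 'a \<Rightarrow> 'r" and x y :: 'a
  assume h: "inc_inverse_of h eta" and xy: "x \<le> y"
  have hl: "(h \<star> eta) x w = inc_unit x w" if "x \<le> w" for w
    using h that unfolding inc_inverse_of_def inc_eq_def by blast
  have "(mm x y :: 'r) = (\<Sum>w\<in>{x..y}. inc_unit x w * mm w y)"
    by (rule unitL[OF assms xy, symmetric])
  also have "\<dots> = (\<Sum>w\<in>{x..y}. (\<Sum>z\<in>{x..w}. h x z * eta z w) * mm w y)"
    by (rule sum.cong) (auto simp: hl[symmetric] inc_mult_def)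
  also have "\<dots> = (\<Sum>z\<in>{x..y}. h x z * (\<Sum>w\<in>{z..y}. eta z w * mm w y))"
    by (rule assoc_gen[OF assms])
  also have "\<dots> = (\<Sum>z\<in>{x..y}. h x z * inc_unit z y)"
    by (rule sum.cong) (auto simp: eta_m[OF assms, symmetric] inc_mult_def)
  also have "\<dots> = h x y" by (rule unitR[OF assms xy])
  finally show "h x y = of_nat (card (max_chains x y))" unfolding mm_def by simp
next
  fix a :: 'a and f g :: "'a \<Rightarrow> 'r"
  show "(\<forall>y. a \<le> y \<longrightarrow> g y = f y - (\<Sum>x\<in>{x. a \<le> x \<and> x \<prec>\<^sub>c y}. f x))
          \<longleftrightarrow> (\<forall>y. a \<le> y \<longrightarrow> f y = (\<Sum>x\<in>{a..y}. of_nat (card (max_chains x y)) * g x))"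
  proof (intro iffI allI impI)
    fix y assume H: "\<forall>y. a \<le> y \<longrightarrow> g y = f y - (\<Sum>x\<in>{x. a \<le> x \<and> x \<prec>\<^sub>c y}. f x)" and ay: "a \<le> y"
    have G: "g x = (\<Sum>w\<in>{a..x}. f w * eta w x)" if "a \<le> x" for x
      using H that etaR[OF assms that, of f] by simp
    have "(\<Sum>x\<in>{a..y}. of_nat (card (max_chains x y)) * g x)
        = (\<Sum>x\<in>{a..y}. (\<Sum>w\<in>{a..x}. f w * eta w x) * mm x y)"
      by (rule sum.cong) (auto simp: G mm_def mult.commute)
    also have "\<dots> = (\<Sum>w\<in>{a..y}. f w * (\<Sum>x\<in>{w..y}. eta w x * mm x y))"
      by (rule assoc_gen[OF assms])
    also have "\<dots> = (\<Sum>w\<in>{a..y}. f w * inc_unit w y)"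
      by (rule sum.cong) (auto simp: eta_m[OF assms, symmetric] inc_mult_def)
    also have "\<dots> = f y" by (rule unitR[OF assms ay])
    finally show "f y = (\<Sum>x\<in>{a..y}. of_nat (card (max_chains x y)) * g x)" by simp
  next
    fix y assume H: "\<forall>y. a \<le> y \<longrightarrow> f y = (\<Sum>x\<in>{a..y}. of_nat (card (max_chains x y)) * g x)" and ay: "a \<le> y"
    have F: "f x = (\<Sum>w\<in>{a..x}. g w * mm w x)" if "a \<le> x" for x
      using H that by (simp add: mm_def mult.commute)
    have "f y - (\<Sum>x\<in>{x. a \<le> x \<and> x \<prec>\<^sub>c y}. f x) = (\<Sum>x\<in>{a..y}. f x * eta x y)"
      by (rule etaR[OF assms ay, symmetric])
    also have "\<dots> = (\<Sum>x\<in>{a..y}. (\<Sum>w\<in>{a..x}. g w * mm w x) * eta x y)"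
      by (rule sum.cong) (auto simp: F)
    also have "\<dots> = (\<Sum>w\<in>{a..y}. g w * (\<Sum>x\<in>{w..y}. mm w x * eta x y))"
      by (rule assoc_gen[OF assms])
    also have "\<dots> = (\<Sum>w\<in>{a..y}. g w * inc_unit w y)"
      by (rule sum.cong) (auto simp: m_eta[OF assms, symmetric] inc_mult_def)
    also have "\<dots> = g y" by (rule unitR[OF assms ay])
    finally show "g y = f y - (\<Sum>x\<in>{x. a \<le> x \<and> x \<prec>\<^sub>c y}. f x)" by simp
  qed
qed

end
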